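(* Let $\mathcal L$ be a linearly ordered non-discrete MV-algebra and let $0\le p<q\le 1$ in $L$. Then $$[q,1]\sqsubseteq\!\!\to\,]p,1]=\,]q\to p,1].$$
   Context: $\mathcal L=(L,\oplus,\lnot,0)$ is a linearly ordered MV-algebra. We write $1=\lnot 0$ and $x\to y=\lnot x\oplus y$. Non-discrete means no element has an immediate successor or an immediate predecessor. We write $[p,1]=\{x: x\ge p\}$ and $]p,1]=\{x:x>p\}$. For an upward-closed $\mathcal F$ and $a\in L$, let $\mathcal F_a=\{z:z\to a\notin\mathcal F\}$. For upward-closed $\mathcal F\subseteq\mathcal G$ we put $\mathcal F\sqsubseteq\!\!\to\mathcal G=\bigcap_{a\in L\setminus\mathcal G}\mathcal F_a$. *)

theory Defs
  imports Main
begin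

definition mv_algebra :: "'a set \<Rightarrow> ('a \<Rightarrow> 'a \<Rightarrow> 'a) \<Rightarrow> ('a \<Rightarrow> 'a) \<Rightarrow> 'a \<Rightarrow> bool" where
  "mv_algebra L oplus neg zero \<longleftrightarrow>
     zero \<in> L \<and>
     (\<forall>x\<in>L. \<forall>y\<in>L. oplus x y \<in> L) \<and>
     (\<forall>x\<in>L. neg x \<in> L) \<and>
     (\<forall>x\<in>L. \<forall>y\<in>L. \<forall>z\<in>L. oplus x (oplus y z) = oplus (oplus x y) z) \<and>
     (\<forall>x\<in>L. \<forall>y\<in>L. oplus x y = oplus y x) \<and>
     (\<forall>x\<in>L. oplus x zero = x) \<and>
     (\<forall>x\<in>L. neg (neg x) = x) \<and>
     (\<forall>x\<in>L. oplus x (neg zero) = neg zero) \<and>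
     (\<forall>x\<in>L. \<forall>y\<in>L. oplus (neg (oplus (neg x) y)) y = oplus (neg (oplus (neg y) x)) x)"

definition mv_one :: "('a \<Rightarrow> 'a) \<Rightarrow> 'a \<Rightarrow> 'a" where
  "mv_one neg zero = neg zero"

definition mv_imp :: "('a \<Rightarrow> 'a \<Rightarrow> 'a) \<Rightarrow> ('a \<Rightarrow> 'a) \<Rightarrow> 'a \<Rightarrow> 'a \<Rightarrow> 'a" where
  "mv_imp oplus neg x y = oplus (neg x) y"

definition mv_le :: "('a \<Rightarrow> 'a \<Rightarrow> 'a) \<Rightarrow> ('a \<Rightarrow> 'a) \<Rightarrow> 'a \<Rightarrow> 'a \<Rightarrow> 'a \<Rightarrow> bool" where
  "mv_le oplus neg zero x y \<longleftrightarrow> mv_imp oplus neg x y = mv_one neg zero"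

definition mv_less :: "('a \<Rightarrow> 'a \<Rightarrow> 'a) \<Rightarrow> ('a \<Rightarrow> 'a) \<Rightarrow> 'a \<Rightarrow> 'a \<Rightarrow> 'a \<Rightarrow> bool" where
  "mv_less oplus neg zero x y \<longleftrightarrow> mv_le oplus neg zero x y \<and> x \<noteq> y"

definition mv_linear :: "'a set \<Rightarrow> ('a \<Rightarrow> 'a \<Rightarrow> 'a) \<Rightarrow> ('a \<Rightarrow> 'a) \<Rightarrow> 'a \<Rightarrow> bool" where
  "mv_linear L oplus neg zero \<longleftrightarrow>
     (\<forall>x\<in>L. \<forall>y\<in>L. mv_le oplus neg zero x y \<or> mv_le oplus neg zero y x)"

definition mv_nondiscrete :: "'a set \<Rightarrow> ('a \<Rightarrow> 'a \<Rightarrow> 'a) \<Rightarrow> ('a \<Rightarrow> 'a) \<Rightarrow> 'a \<Rightarrow> bool" where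
  "mv_nondiscrete L oplus neg zero \<longleftrightarrow>
     \<not> (\<exists>x\<in>L. \<exists>y\<in>L. mv_less oplus neg zero x y \<and>
            \<not> (\<exists>z\<in>L. mv_less oplus neg zero x z \<and> mv_less oplus neg zero z y)) \<and>
     \<not> (\<exists>y\<in>L. \<exists>x\<in>L. mv_less oplus neg zero x y \<and>
            \<not> (\<exists>z\<in>L. mv_less oplus neg zero x z \<and> mv_less oplus neg zero z y))"

definition mv_closed_up :: "'a set \<Rightarrow> ('a \<Rightarrow> 'a \<Rightarrow> 'a) \<Rightarrow> ('a \<Rightarrow> 'a) \<Rightarrow> 'a \<Rightarrow> 'a \<Rightarrow> 'a set" where
  "mv_closed_up L oplus neg zero p = {x\<in>L. mv_le oplus neg zero p x}"

definition mv_open_up :: "'a set \<Rightarrow> ('a \<Rightarrow> 'a \<Rightarrow> 'a) \<Rightarrow> ('a \<Rightarrow> 'a) \<Rightarrow> 'a \<Rightarrow> 'a \<Rightarrow> 'a set" where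
  "mv_open_up L oplus neg zero p = {x\<in>L. mv_less oplus neg zero p x}"

definition mv_Fa :: "'a set \<Rightarrow> ('a \<Rightarrow> 'a \<Rightarrow> 'a) \<Rightarrow> ('a \<Rightarrow> 'a) \<Rightarrow> 'a set \<Rightarrow> 'a \<Rightarrow> 'a set" where
  "mv_Fa L oplus neg F a = {z\<in>L. mv_imp oplus neg z a \<notin> F}"

definition mv_rel_arrow :: "'a set \<Rightarrow> ('a \<Rightarrow> 'a \<Rightarrow> 'a) \<Rightarrow> ('a \<Rightarrow> 'a) \<Rightarrow> 'a set \<Rightarrow> 'a set \<Rightarrow> 'a set" where
  "mv_rel_arrow L oplus neg F G = {z\<in>L. \<forall>a\<in>L - G. z \<in> mv_Fa L oplus neg F a}"

end

theory Submission
  imports Defs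
begin

lemma mvA:
  assumes "mv_algebra L f n z"
  shows "z \<in> L" "\<And>x y. x\<in>L \<Longrightarrow> y\<in>L \<Longrightarrow> f x y \<in> L" "\<And>x. x\<in>L \<Longrightarrow> n x \<in> L"
   "\<And>x y w. x\<in>L \<Longrightarrow> y\<in>L \<Longrightarrow> w\<in>L \<Longrightarrow> f x (f y w) = f (f x y) w"
   "\<And>x y. x\<in>L \<Longrightarrow> y\<in>L \<Longrightarrow> f x y = f y x"
   "\<And>x. x\<in>L \<Longrightarrow> f x z = x" "\<And>x. x\<in>L \<Longrightarrow> n (n x) = x"
   "\<And>x. x\<in>L \<Longrightarrow> f x (n z) = n z"
   "\<And>x y. x\<in>L \<Longrightarrow> y\<in>L \<Longrightarrow> f (n (f (n x) y)) y = f (n (f (n y) x)) x"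
  using assms unfolding mv_algebra_def by blast+

lemma mv_refl:
  assumes "mv_algebra L f n z" "x \<in> L"
  shows "mv_le f n z x x"
proof -
  note A = mvA[OF assms(1)]
  have "f (n (f (n (n z)) x)) x = f (n (f (n x) (n z))) (n z)"
    using A(9)[of "n z" x] A(1,3) assms(2) by blast
  also have "\<dots> = n z" using A(8)[of "n (f (n x) (n z))"] A(2,3) assms(2) A(1) by blast
  finally have "f (n (f z x)) x = n z" using A(7) A(1) by simp
  moreover have "f z x = x" using A(5)[of z x] A(6)[of x] A(1) assms(2) by simp
  ultimately show ?thesis unfolding mv_le_def mv_imp_def mv_one_def by simp
qed

lemma mv_antisym:
  assumes "mv_algebra L f n z" "x \<in> L" "y \<in> L" "mv_le f n z x y" "mv_le f n z y x"
  shows "x = y"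
proof -
  note A = mvA[OF assms(1)]
  have 1: "f (n x) y = n z" "f (n y) x = n z"
    using assms(4,5) unfolding mv_le_def mv_imp_def mv_one_def by auto
  have "f (n (f (n x) y)) y = f (n (f (n y) x)) x" using A(9)[of x y] assms by blast
  then have "f z y = f z x" using 1 A(7)[of z] A(1) by simp
  then show ?thesis using A(5)[of z x] A(5)[of z y] A(6) A(1) assms(2,3) by simp
qed

lemma mv_le_iff:
  assumes "mv_algebra L f n z" "x \<in> L" "y \<in> L"
  shows "mv_le f n z x y \<longleftrightarrow> (\<exists>w\<in>L. y = f x w)"
proof
  note A = mvA[OF assms(1)]
  assume h: "mv_le f n z x y"
  have 1: "f (n x) y = n z" using h unfolding mv_le_def mv_imp_def mv_one_def by auto
  have "f (n (f (n x) y)) y = f (n (f (n y) x)) x" using A(9)[of x y] assms by blast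
  then have "y = f (n (f (n y) x)) x" using 1 A(7)[of z] A(1) A(5)[of z y] A(6)[of y] assms by simp
  then have "y = f x (n (f (n y) x))" using A(5)[of "n (f (n y) x)" x] A(2,3) assms by simp
  moreover have "n (f (n y) x) \<in> L" using A(2,3) assms by blast
  ultimately show "\<exists>w\<in>L. y = f x w" by blast
next
  note A = mvA[OF assms(1)]
  assume "\<exists>w\<in>L. y = f x w"
  then obtain w where w: "w \<in> L" "y = f x w" by blast
  have r: "f (n x) x = n z" using mv_refl[OF assms(1,2)]
    unfolding mv_le_def mv_imp_def mv_one_def .
  have "f (n x) y = f (f (n x) x) w" using A(4)[of "n x" x w] A(3) assms w by simp
  also have "\<dots> = n z" using r A(5)[of "n z" w] A(8)[of w] A(1,3) w by simp
  finally show "mv_le f n z x y" unfolding mv_le_def mv_imp_def mv_one_def .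
qed

lemma mv_trans:
  assumes "mv_algebra L f n z" "x \<in> L" "y \<in> L" "w \<in> L" "mv_le f n z x y" "mv_le f n z y w"
  shows "mv_le f n z x w"
proof -
  note A = mvA[OF assms(1)]
  obtain a where a: "a\<in>L" "y = f x a" using mv_le_iff[OF assms(1,2,3)] assms(5) by blast
  obtain b where b: "b\<in>L" "w = f y b" using mv_le_iff[OF assms(1,3,4)] assms(6) by blast
  have "w = f x (f a b)" using a b A(4)[of x a b] assms by simp
  then show ?thesis using mv_le_iff[OF assms(1,2,4)] A(2) a b by blast
qed

lemma mv_mono:
  assumes "mv_algebra L f n z" "x \<in> L" "y \<in> L" "c \<in> L" "mv_le f n z x y"
  shows "mv_le f n z (f c x) (f c y)"
proof -
  note A = mvA[OF assms(1)]
  obtain a where a: "a\<in>L" "y = f x a" using mv_le_iff[OF assms(1,2,3)] assms(5) by blast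
  have "f c y = f (f c x) a" using a A(4)[of c x a] assms by simp
  then show ?thesis using mv_le_iff[OF assms(1)] A(2) a assms by blast
qed

theorem mainTheorem15:
  fixes L :: "'a set" and oplus :: "'a \<Rightarrow> 'a \<Rightarrow> 'a" and neg :: "'a \<Rightarrow> 'a"
    and zero p q :: 'a
  assumes "mv_algebra L oplus neg zero"
    and "mv_linear L oplus neg zero"
    and "mv_nondiscrete L oplus neg zero"
    and "p \<in> L" and "q \<in> L"
    and "mv_le oplus neg zero zero p"
    and "mv_less oplus neg zero p q"
    and "mv_le oplus neg zero q (mv_one neg zero)"
  shows "mv_rel_arrow L oplus neg (mv_closed_up L oplus neg zero q) (mv_open_up L oplus neg zero p)
         = mv_open_up L oplus neg zero (mv_imp oplus neg q p)"
proof -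
  note mv = assms(1)
  note A = mvA[OF mv]
  have lin: "\<And>x y. x\<in>L \<Longrightarrow> y\<in>L \<Longrightarrow> mv_le oplus neg zero x y \<or> mv_le oplus neg zero y x"
    using assms(2) unfolding mv_linear_def by blast
  have ex: "\<And>x y w. x\<in>L \<Longrightarrow> y\<in>L \<Longrightarrow> w\<in>L \<Longrightarrow>
      mv_le oplus neg zero x (mv_imp oplus neg y w) \<longleftrightarrow> mv_le oplus neg zero y (mv_imp oplus neg x w)"
  proof -
    fix x y w assume h: "x\<in>L" "y\<in>L" "w\<in>L"
    have "oplus (neg x) (oplus (neg y) w) = oplus (neg y) (oplus (neg x) w)"
      using A(4)[of "neg x" "neg y" w] A(4)[of "neg y" "neg x" w] A(5)[of "neg x" "neg y"] A(3) h by simp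
    then show "?thesis x y w" unfolding mv_le_def mv_imp_def by simp
  qed
  have qpL: "mv_imp oplus neg q p \<in> L" unfolding mv_imp_def using A(2,3) assms by blast
  show ?thesis
  proof (rule set_eqI, rule iffI)
    fix x assume x: "x \<in> mv_rel_arrow L oplus neg (mv_closed_up L oplus neg zero q) (mv_open_up L oplus neg zero p)"
    have xL: "x \<in> L" using x unfolding mv_rel_arrow_def by blast
    have "p \<notin> mv_open_up L oplus neg zero p" unfolding mv_open_up_def mv_less_def by blast
    then have "x \<in> mv_Fa L oplus neg (mv_closed_up L oplus neg zero q) p" using x assms(4)
      unfolding mv_rel_arrow_def by blast
    then have "\<not> mv_le oplus neg zero q (mv_imp oplus neg x p)"
      unfolding mv_Fa_def mv_closed_up_def mv_imp_def using A(2,3) xL assms by blast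
    then have n: "\<not> mv_le oplus neg zero x (mv_imp oplus neg q p)" using ex xL assms by blast
    then have "mv_le oplus neg zero (mv_imp oplus neg q p) x" using lin xL qpL by blast
    moreover have "mv_imp oplus neg q p \<noteq> x" using n mv_refl[OF mv xL] by blast
    ultimately show "x \<in> mv_open_up L oplus neg zero (mv_imp oplus neg q p)"
      unfolding mv_open_up_def mv_less_def using xL by blast
  next
    fix x assume x: "x \<in> mv_open_up L oplus neg zero (mv_imp oplus neg q p)"
    have xL: "x \<in> L" and l1: "mv_le oplus neg zero (mv_imp oplus neg q p) x"
      and ne: "mv_imp oplus neg q p \<noteq> x"
      using x unfolding mv_open_up_def mv_less_def by blast+
    have "x \<in> mv_Fa L oplus neg (mv_closed_up L oplus neg zero q) a"
      if a: "a \<in> L - mv_open_up L oplus neg zero p" for a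
    proof -
      have aL: "a \<in> L" using a by blast
      have "\<not> mv_less oplus neg zero p a" using a unfolding mv_open_up_def by blast
      then have ap: "mv_le oplus neg zero a p"
        using lin[OF aL assms(4)] mv_refl[OF mv aL] unfolding mv_less_def by blast
      have "\<not> mv_le oplus neg zero q (mv_imp oplus neg x a)"
      proof
        assume "mv_le oplus neg zero q (mv_imp oplus neg x a)"
        then have h: "mv_le oplus neg zero x (mv_imp oplus neg q a)" using ex xL assms aL by blast
        have "mv_le oplus neg zero (mv_imp oplus neg q a) (mv_imp oplus neg q p)"
          unfolding mv_imp_def using mv_mono[OF mv aL assms(4) _ ap] A(3) assms by blast
        then have "mv_le oplus neg zero x (mv_imp oplus neg q p)"
          using mv_trans[OF mv xL _ qpL h] A(2,3) assms aL unfolding mv_imp_def by blast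
        then have "x = mv_imp oplus neg q p" using mv_antisym[OF mv xL qpL _ l1] by blast
        then show False using ne by simp
      qed
      then show ?thesis unfolding mv_Fa_def mv_closed_up_def using xL by blast
    qed
    then show "x \<in> mv_rel_arrow L oplus neg (mv_closed_up L oplus neg zero q) (mv_open_up L oplus neg zero p)"
      unfolding mv_rel_arrow_def using xL by blast
  qed
qed

end
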